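(* An $\mathbb{F}_q$-linear automorphism $\varphi$ of $\mathbb{F}_{q^m}$ is fully linear over $\mathbb{F}_{q^m}$ if and only if there exist $\beta\in\mathbb{F}_{q^m}^*$ and $j\in\{0,1,\dots,m-1\}$ such that $\varphi(\mu)=\beta\,\mu^{q^j}$ for all $\mu\in\mathbb{F}_{q^m}$.
   Context: $q$ is a prime power (the paper takes $q$ a power of $2$). An $\mathbb{F}_q$-linear automorphism of $\mathbb{F}_{q^m}$ is a bijective $\mathbb{F}_q$-linear map $\varphi:\mathbb{F}_{q^m}\to\mathbb{F}_{q^m}$, applied componentwise to vectors. For an $\mathbb{F}_{q^m}$-linear code $\mathcal{C}\subseteq\mathbb{F}_{q^m}^n$, $\varphi$ is linear on $\mathcal{C}$ if $\varphi(\mathcal{C})=\{\varphi(\bm{c}):\bm{c}\in\mathcal{C}\}$ is an $\mathbb{F}_{q^m}$-linear subspace. $\varphi$ is fully linear over $\mathbb{F}_{q^m}$ if it is linear on every $\mathbb{F}_{q^m}$-linear code of every length $n\ge1$. *)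

theory Defs
  imports Main
begin

definition is_subfield :: "'a::field set \<Rightarrow> bool" where
  "is_subfield K \<longleftrightarrow> 0 \<in> K \<and> 1 \<in> K \<and>
     (\<forall>x\<in>K. \<forall>y\<in>K. x + y \<in> K \<and> x * y \<in> K) \<and>
     (\<forall>x\<in>K. - x \<in> K) \<and> (\<forall>x\<in>K. x \<noteq> 0 \<longrightarrow> inverse x \<in> K)"

definition lin_aut :: "'a::field set \<Rightarrow> ('a \<Rightarrow> 'a) \<Rightarrow> bool" where
  "lin_aut K \<phi> \<longleftrightarrow> bij \<phi> \<and> (\<forall>x y. \<phi> (x + y) = \<phi> x + \<phi> y) \<and>
     (\<forall>c\<in>K. \<forall>x. \<phi> (c * x) = c * \<phi> x)"

text \<open>Vectors of length n over 'a are lists of length n; a linear code of length n is an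
  'a-linear subspace of the set of such lists.\<close>
definition vadd :: "'a::field list \<Rightarrow> 'a list \<Rightarrow> 'a list" where
  "vadd u v = map2 (+) u v"

definition vsmult :: "'a::field \<Rightarrow> 'a list \<Rightarrow> 'a list" where
  "vsmult a v = map (\<lambda>x. a * x) v"

definition is_subspace :: "nat \<Rightarrow> 'a::field list set \<Rightarrow> bool" where
  "is_subspace n C \<longleftrightarrow> C \<subseteq> {v. length v = n} \<and> replicate n 0 \<in> C \<and>
     (\<forall>u\<in>C. \<forall>v\<in>C. vadd u v \<in> C) \<and> (\<forall>a. \<forall>v\<in>C. vsmult a v \<in> C)"

definition linear_on_code :: "('a::field \<Rightarrow> 'a) \<Rightarrow> nat \<Rightarrow> 'a list set \<Rightarrow> bool" where
  "linear_on_code \<phi> n C \<longleftrightarrow> is_subspace n ((map \<phi>) ` C)"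

definition fully_linear :: "('a::field \<Rightarrow> 'a) \<Rightarrow> bool" where
  "fully_linear \<phi> \<longleftrightarrow> (\<forall>n\<ge>1. \<forall>C. is_subspace n C \<longrightarrow> linear_on_code \<phi> n C)"

end

theory Submission
  imports Defs "HOL-Algebra.Multiplicative_Group" "HOL-Computational_Algebra.Polynomial" "HOL-Computational_Algebra.Primes" "HOL-Number_Theory.Cong"
begin

lemma CHAR_prime_fin: "prime CHAR('a::{finite,field})"
  by (intro prime_CHAR_semidom finite_imp_CHAR_pos) simp

lemma natmul_closed:
  assumes "0 \<in> B" "\<forall>x\<in>B. \<forall>y\<in>B. x+y \<in> B" "x \<in> B"
  shows "(of_nat n :: 'a::field) * x \<in> B"
  using assms by (induction n) (auto simp: distrib_right)

lemma neg_closed: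
  assumes "0 \<in> B" "\<forall>x\<in>B. \<forall>y\<in>B. x+y \<in> B" "x \<in> B"
  shows "- (x::'a::{finite,field}) \<in> B"
proof -
  let ?p = "CHAR('a)"
  have p1: "?p \<ge> 1" using prime_ge_2_nat[OF CHAR_prime_fin[where 'a='a]] by simp
  have "(of_nat (?p - 1) :: 'a) * x + x = of_nat ?p * x"
    using p1 by (simp add: distrib_right of_nat_diff)
  also have "\<dots> = 0" by simp
  finally have "- x = of_nat (?p - 1) * x" by (metis add_eq_0_iff2 add.commute)
  then show ?thesis using natmul_closed[OF assms] by simp
qed

lemma card_step:
  fixes A B :: "'a::{finite,field} set"
  assumes B0: "0 \<in> B" and Badd: "\<forall>x\<in>B. \<forall>y\<in>B. x+y \<in> B" and BA: "B \<subseteq> A"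
    and A0: "0 \<in> A" and Aadd: "\<forall>x\<in>A. \<forall>y\<in>A. x+y \<in> A"
  shows "\<exists>k. card A = CHAR('a) ^ k * card B"
  using B0 Badd BA
proof (induction "card A - card B" arbitrary: B rule: less_induct)
  case less
  let ?p = "CHAR('a)"
  have pp: "prime ?p" by (rule CHAR_prime_fin)
  have p2: "?p \<ge> 2" using prime_ge_2_nat[OF pp] .
  show ?case
  proof (cases "B = A")
    case True then show ?thesis by (intro exI[of _ 0]) simp
  next
    case False
    then obtain x where xA: "x \<in> A" and xB: "x \<notin> B" using less.prems by blast
    define f where "f = (\<lambda>(b, i). b + of_nat i * x)"
    define B' where "B' = f ` (B \<times> {..<?p})"
    have inj: "inj_on f (B \<times> {..<?p})"
    proof (rule inj_onI, clarify)
      fix b i b' i' assume b: "b \<in> B" "i < ?p" "b' \<in> B" "i' < ?p" and eq: "f (b, i) = f (b', i')"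
      have main: "i = i'" if b: "b \<in> B" "b' \<in> B" "i < ?p" "i' < ?p" "i' < i"
           and eq: "b + of_nat i * x = b' + of_nat i' * x" for b b' i i'
      proof -
        define d where "d = i - i'"
        have d: "0 < d" "d < ?p" using that by (auto simp: d_def)
        have "of_nat d * x = b' + - b" using eq that
          by (simp add: d_def of_nat_diff algebra_simps)
        also have "\<dots> \<in> B" using less.prems neg_closed[OF less.prems(1,2)] b by blast
        finally have dB: "of_nat d * x \<in> B" .
        have "coprime d ?p"
          using d pp by (metis coprime_commute dvd_imp_le not_less prime_imp_coprime)
        then obtain e where e: "[d * e = Suc 0] (mod ?p)" using cong_solve_coprime_nat by blast
        have "(of_nat (d * e) :: 'a) = of_nat (Suc 0)"
          using e by (simp only: of_nat_eq_iff_cong_CHAR)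
        then have "x = of_nat e * (of_nat d * x)" by (simp add: algebra_simps)
        also have "\<dots> \<in> B" using natmul_closed[OF less.prems(1,2) dB] .
        finally show ?thesis using xB by simp
      qed
      have eq': "b + of_nat i * x = b' + of_nat i' * x" using eq by (simp add: f_def)
      have "i = i'"
      proof (rule linorder_cases[of i i'])
        assume "i < i'" then show ?thesis using main[of b' b i' i] b eq' by simp
      next
        assume "i' < i" then show ?thesis using main[of b b' i i'] b eq' by simp
      qed
      then show "b = b' \<and> i = i'" using eq by (simp add: f_def)
    qed
    have cardB': "card B' = ?p * card B"
      unfolding B'_def using card_image[OF inj] by (simp add: card_cartesian_product)
    have B'A: "B' \<subseteq> A"
    proof
      fix y assume "y \<in> B'"
      then obtain b i where "b \<in> B" "y = b + of_nat i * x" by (auto simp: B'_def f_def)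
      then show "y \<in> A" using less.prems(3) natmul_closed[OF A0 Aadd xA] Aadd by blast
    qed
    have B'0: "0 \<in> B'" unfolding B'_def using less.prems(1) p2
      by (intro image_eqI[of _ _ "(0,0)"]) (auto simp: f_def)
    have B'add: "\<forall>u\<in>B'. \<forall>v\<in>B'. u + v \<in> B'"
    proof (intro ballI)
      fix u v assume "u \<in> B'" "v \<in> B'"
      then obtain b i b' i' where u: "b \<in> B" "u = b + of_nat i * x" and v: "b' \<in> B" "v = b' + of_nat i' * x"
        by (auto simp: B'_def f_def)
      have "(of_nat ((i + i') mod ?p) :: 'a) = of_nat (i + i')"
        by (simp only: of_nat_eq_iff_cong_CHAR) (simp add: cong_def)
      then have "u + v = f (b + b', (i + i') mod ?p)"
        using u v by (simp add: f_def algebra_simps)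
      moreover have "(b + b', (i + i') mod ?p) \<in> B \<times> {..<?p}"
        using u v less.prems(2) p2 by auto
      ultimately show "u + v \<in> B'" unfolding B'_def by blast
    qed
    have cB: "card B \<ge> 1" using less.prems(1) by (metis card_0_eq empty_iff finite less_one not_le)
    have "card B' \<le> card A" using B'A by (simp add: card_mono)
    moreover have "card B < card B'" using cardB' cB p2 by simp
    ultimately have "card A - card B' < card A - card B" by simp
    from less.hyps[OF this B'0 B'add B'A] obtain k where "card A = ?p ^ k * card B'" by blast
    then show ?thesis using cardB' by (intro exI[of _ "Suc k"]) simp
  qed
qed

lemma card_pow_char:
  fixes A :: "'a::{finite,field} set"
  assumes "0 \<in> A" "\<forall>x\<in>A. \<forall>y\<in>A. x+y \<in> A"
  shows "\<exists>k. card A = CHAR('a) ^ k"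
  using card_step[of "{0}" A] assms by auto


definition rt :: "'a::field ring" where "rt = \<lparr>carrier = UNIV, monoid.mult = (*), one = 1, zero = 0, add = (+)\<rparr>"

lemma rt_field: "field (rt :: 'a::field ring)"
proof -
  have "\<exists>y. x + y = 0" for x :: 'a
    using add.right_inverse by blast
  moreover have "x \<noteq> 0 \<Longrightarrow> \<exists>y. x * y = 1" for x :: 'a
    by (rule exI[of _ "inverse x"]) auto
  ultimately show ?thesis
    unfolding rt_def 
    by unfold_locales (auto simp:algebra_simps Units_def)
qed

lemma rt_pow: "x [^]\<^bsub>(rt::'a::field ring)\<^esub> (n::nat) = x ^ n"
  by (induction n) (auto simp: rt_def)

lemma gen_exists:
  "\<exists>g::'a::{finite,field}. \<forall>y. y \<noteq> 0 \<longrightarrow> (\<exists>i::nat. y = g ^ i)"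
proof -
  interpret field "rt :: 'a ring" by (rule rt_field)
  have "finite (carrier (rt::'a ring))" by simp
  from finite_field_mult_group_has_gen[OF this] obtain a where
    a: "carrier (mult_of (rt::'a ring)) = {a[^]\<^bsub>rt\<^esub> i | i::nat . i \<in> UNIV}" by blast
  show ?thesis
  proof (intro exI[of _ a] allI impI)
    fix y :: 'a assume "y \<noteq> 0"
    then have "y \<in> carrier (mult_of (rt::'a ring))" by (simp add: rt_def)
    then show "\<exists>i. y = a ^ i" using a by (auto simp: rt_pow)
  qed
qed


lemma pow_card:
  fixes S :: "'a::{finite,field} set"
  assumes "0 \<in> S" and mul: "\<forall>x\<in>S. \<forall>y\<in>S. x*y \<in> S" and inv: "\<forall>x\<in>S. inverse x \<in> S" and "x \<in> S"
  shows "x ^ card S = x"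
proof (cases "x = 0")
  case True
  have "card S > 0" using assms(1) by (metis card_gt_0_iff empty_iff finite)
  then show ?thesis using True by simp
next
  case False
  have fin: "finite S" by simp
  have cS: "card S = Suc (card (S - {0}))" using assms(1)
    by (metis card_Suc_Diff1 fin)
  have "(\<Prod>y\<in>S-{0}. x * y) = (\<Prod>y\<in>S-{0}. y)"
    by (rule prod.reindex_bij_witness[of _ "\<lambda>y. y / x" "\<lambda>y. x * y"])
       (use False mul inv \<open>x \<in> S\<close> in \<open>auto simp: divide_inverse\<close>)
  moreover have "(\<Prod>y\<in>S-{0}. x * y) = x ^ card (S - {0}) * (\<Prod>y\<in>S-{0}. y)"
    by (simp add: prod.distrib)
  moreover have "(\<Prod>y\<in>S-{0}. y) \<noteq> 0" by simp
  ultimately have "x ^ card (S - {0}) = 1" by simp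
  then show ?thesis using cS by simp
qed

locale hom_ax =
  fixes h :: "'a::field \<Rightarrow> 'a"
  assumes hadd: "\<And>x y. h (x + y) = h x + h y" and hmul: "\<And>x y. h (x * y) = h x * h y"
    and h1: "h 1 = 1"
begin
lemma h0[simp]: "h 0 = 0"
proof -
  have "h 0 + h 0 = h 0 + 0" using hadd[of 0 0] by simp
  then show ?thesis by (rule add_left_imp_eq)
qed
lemma hnz: "x \<noteq> 0 \<Longrightarrow> h x \<noteq> 0"
  using hmul[of x "inverse x"] h1 by auto
lemma hneg[simp]: "h (- x) = - h x"
  using hadd[of x "-x"] by (simp add: eq_neg_iff_add_eq_0 add.commute)
lemma hsum: "h (sum f A) = sum (\<lambda>i. h (f i)) A"
  by (induction A rule: infinite_finite_induct) (auto simp: hadd)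
lemma hpow: "h (x ^ n) = h x ^ n"
  by (induction n) (auto simp: hmul h1)
lemma map_mult: "map_poly h (p * q) = map_poly h p * map_poly h q"
  by (rule poly_eqI) (simp add: coeff_map_poly coeff_mult hsum hmul)
lemma map_prod: "map_poly h (prod f A) = prod (\<lambda>i. map_poly h (f i)) A"
  by (induction A rule: infinite_finite_induct) (auto simp: map_mult map_poly_pCons h1)
lemma map_lin: "map_poly h [:a, b:] = [:h a, h b:]"
  by (simp add: map_poly_pCons)
lemma hpoly: "h (poly p x) = poly (map_poly h p) (h x)"
  by (simp add: poly_altdef hsum hmul hpow coeff_map_poly degree_map_poly hnz)
end

lemma aut_form:
  fixes K :: "'a::{finite,field} set" and \<psi> :: "'a \<Rightarrow> 'a"
  assumes K: "is_subfield K" and cK: "card K = q" and cU: "card (UNIV :: 'a set) = q ^ m" and m1: "m \<ge> 1"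
    and hom: "hom_ax \<psi>" and fixK: "\<forall>c\<in>K. \<psi> c = c"
  shows "\<exists>j<m. \<forall>\<mu>. \<psi> \<mu> = \<mu> ^ (q ^ j)"
proof -
  interpret \<psi>: hom_ax \<psi> by (rule hom)
  have K0: "0 \<in> K" and K1: "1 \<in> K" and Kadd: "\<forall>x\<in>K. \<forall>y\<in>K. x+y \<in> K"
    and Kmul: "\<forall>x\<in>K. \<forall>y\<in>K. x*y \<in> K"
    using K unfolding is_subfield_def by auto
  have Kinv: "\<forall>x\<in>K. inverse x \<in> K" using K unfolding is_subfield_def
    by (metis inverse_zero)
  have Kpow: "x ^ q = x" if "x \<in> K" for x using pow_card[OF K0 Kmul Kinv that] cK by simp
  have q2: "q \<ge> 2"
  proof -
    have "{0,1} \<subseteq> K" using K0 K1 by auto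
    then have "card {0::'a,1} \<le> card K" by (intro card_mono) auto
    then show ?thesis using cK by simp
  qed
  have Ueq: "x ^ (q ^ m) = x" for x :: 'a
    using pow_card[of UNIV x] cU by simp
  obtain k where qk: "q = CHAR('a) ^ k" using card_pow_char[OF K0 Kadd] cK by auto
  define Fr where "Fr = (\<lambda>x::'a. x ^ q)"
  interpret Fr: hom_ax Fr
    by unfold_locales (auto simp: Fr_def power_mult_distrib freshmans_dream'[OF CHAR_prime_fin qk])
  have KFr: "{x. Fr x = x} \<subseteq> K"
  proof -
    define P where "P = (monom (1::'a) q - [:0, 1:])"
    have "coeff [:0,1::'a:] q = 0" using q2 by (intro coeff_eq_0) simp
    then have "coeff P q = 1" by (simp add: P_def)
    then have P0: "P \<noteq> 0" by auto
    have "degree P \<le> q" unfolding P_def using q2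
      by (intro degree_diff_le) (auto simp: degree_monom_le)
    then have c1: "card {x. poly P x = 0} \<le> q" using card_poly_roots_bound[OF P0] by simp
    have eqs: "{x. poly P x = 0} = {x. Fr x = x}" by (auto simp: P_def Fr_def poly_monom)
    have "K \<subseteq> {x. Fr x = x}" using Kpow by (auto simp: Fr_def)
    moreover have "card {x. Fr x = x} \<le> card K" using c1 eqs cK by simp
    ultimately show ?thesis
      by (metis card_seteq finite dual_order.eq_iff)
  qed
  obtain g :: 'a where gen: "\<forall>y. y \<noteq> 0 \<longrightarrow> (\<exists>i::nat. y = g ^ i)" using gen_exists by blast
  define r where "r = (\<lambda>j. g ^ (q ^ j))"
  define f where "f = (\<Prod>j<m. [:- r j, 1:])"
  have "map_poly Fr f = (\<Prod>j<m. [:- r (Suc j), 1:])"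
    unfolding f_def Fr.map_prod Fr.map_lin Fr.hneg Fr.h1
    by (intro prod.cong refl) (simp add: Fr_def r_def power_mult[symmetric] mult.commute)
  also have "\<dots> = f"
  proof -
    obtain m' where mm: "m = Suc m'" using m1 by (cases m) auto
    have "r (Suc m') = r 0" using Ueq mm by (simp add: r_def)
    define F where "F = (\<lambda>j. [:- r j, 1:])"
    have "(\<Prod>j<Suc m'. F (Suc j)) = (\<Prod>j<m'. F (Suc j)) * F (Suc m')"
      by (rule prod.lessThan_Suc)
    also have "\<dots> = F 0 * (\<Prod>j<m'. F (Suc j))"
      using \<open>r (Suc m') = r 0\<close> by (simp add: F_def mult.commute)
    also have "\<dots> = (\<Prod>j<Suc m'. F j)"
      by (rule prod.lessThan_Suc_shift[symmetric])
    finally show ?thesis unfolding f_def mm F_def .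
  qed
  finally have mf: "map_poly Fr f = f" .
  have cf: "coeff f i \<in> K" for i
  proof -
    have "Fr (coeff f i) = coeff f i"
      using arg_cong[OF mf, of "\<lambda>p. coeff p i"] by (simp add: coeff_map_poly)
    then show ?thesis using KFr by auto
  qed
  have mpsi: "map_poly \<psi> f = f"
    by (rule poly_eqI) (simp add: coeff_map_poly fixK cf)
  have pf: "poly f y = (\<Prod>j<m. y - r j)" for y by (simp add: f_def poly_prod)
  have "poly f g = 0" unfolding pf using m1
    by (auto simp: prod_zero_iff r_def intro!: bexI[of _ 0])
  then have "poly f (\<psi> g) = 0" using \<psi>.hpoly[of f g] mpsi by simp
  then obtain j where j: "j < m" "\<psi> g = r j" unfolding pf by (auto simp: prod_zero_iff)
  show ?thesis
  proof (intro exI[of _ j] conjI allI)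
    show "j < m" by fact
    fix \<mu> :: 'a
    show "\<psi> \<mu> = \<mu> ^ (q ^ j)"
    proof (cases "\<mu> = 0")
      case True then show ?thesis using q2 by simp
    next
      case False
      then obtain i where "\<mu> = g ^ i" using gen by blast
      then show ?thesis using j by (simp add: \<psi>.hpow r_def power_mult[symmetric] mult.commute)
    qed
  qed
qed


lemma map2_hom:
  assumes "\<And>x y. h (x + y) = h x + h y" "length u = length v"
  shows "map2 (+) (map h u) (map h v) = map h (map2 (+) u v)"
  using assms(2) by (induction u v rule: list_induct2) (auto simp: assms(1))

theorem mainTheorem4:
  fixes K :: "'a::{finite,field} set" and q m :: nat and \<phi> :: "'a \<Rightarrow> 'a"
  assumes "is_subfield K" and "card K = q" and "card (UNIV :: 'a set) = q ^ m" and "m \<ge> 1"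
    and "lin_aut K \<phi>"
  shows "fully_linear \<phi> \<longleftrightarrow>
    (\<exists>\<beta> j. \<beta> \<noteq> 0 \<and> j < m \<and> (\<forall>\<mu>. \<phi> \<mu> = \<beta> * \<mu> ^ (q ^ j)))"
proof -
  have bij: "bij \<phi>" and padd: "\<And>x y. \<phi> (x + y) = \<phi> x + \<phi> y"
    and phom: "\<And>c x. c \<in> K \<Longrightarrow> \<phi> (c * x) = c * \<phi> x"
    using assms(5) unfolding lin_aut_def by auto
  have p0: "\<phi> 0 = 0"
  proof -
    have "\<phi> 0 + \<phi> 0 = \<phi> 0 + 0" using padd[of 0 0] by simp
    then show ?thesis by (rule add_left_imp_eq)
  qed
  have inj: "\<phi> a = \<phi> b \<Longrightarrow> a = b" for a b using bij by (meson bij_def injD)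
  have surj: "\<exists>a. \<phi> a = y" for y using bij unfolding bij_iff by metis
  have p1: "\<phi> 1 \<noteq> 0" using inj[of 1 0] p0 by auto
  show ?thesis
  proof
    assume FL: "fully_linear \<phi>"
    have key: "\<phi> (a * x) = \<phi> a * \<phi> x / \<phi> 1" for a x
    proof -
      define C where "C = range (\<lambda>a. [a, a * x])"
      have "is_subspace 2 C"
        unfolding is_subspace_def C_def
      proof (intro conjI ballI allI)
        show "range (\<lambda>a. [a, a * x]) \<subseteq> {v. length v = 2}" by auto
        show "replicate 2 0 \<in> range (\<lambda>a. [a, a * x])"
          by (rule image_eqI[of _ _ 0]) (auto simp: numeral_2_eq_2)
      next
        fix u v assume "u \<in> range (\<lambda>a. [a, a * x])" "v \<in> range (\<lambda>a. [a, a * x])"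
        then show "vadd u v \<in> range (\<lambda>a. [a, a * x])"
          by (auto simp: vadd_def algebra_simps intro!: image_eqI)
      next
        fix c v assume "v \<in> range (\<lambda>a. [a, a * x])"
        then show "vsmult c v \<in> range (\<lambda>a. [a, a * x])"
          by (auto simp: vsmult_def algebra_simps intro!: image_eqI)
      qed
      then have "is_subspace 2 (map \<phi> ` C)" using FL unfolding fully_linear_def linear_on_code_def by auto
      moreover have "map \<phi> [1, x] \<in> map \<phi> ` C" unfolding C_def by (auto intro!: image_eqI[of _ _ "[1, 1 * x]"])
      ultimately have "vsmult (\<phi> a / \<phi> 1) (map \<phi> [1, x]) \<in> map \<phi> ` C"
        unfolding is_subspace_def by blast
      then obtain b where "[\<phi> a / \<phi> 1 * \<phi> 1, \<phi> a / \<phi> 1 * \<phi> x] = [\<phi> b, \<phi> (b * x)]"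
        by (auto simp: vsmult_def C_def)
      then have "\<phi> a = \<phi> b" "\<phi> (b * x) = \<phi> a / \<phi> 1 * \<phi> x" using p1 by auto
      then show ?thesis using inj by force
    qed
    define \<psi> where "\<psi> = (\<lambda>x. \<phi> x / \<phi> 1)"
    have hom: "hom_ax \<psi>"
      by unfold_locales (auto simp: \<psi>_def padd key p1 add_divide_distrib)
    have fixK: "\<forall>c\<in>K. \<psi> c = c" using phom[of _ 1] p1 by (simp add: \<psi>_def)
    obtain j where j: "j < m" "\<forall>\<mu>. \<psi> \<mu> = \<mu> ^ (q ^ j)"
      using aut_form[OF assms(1-4) hom fixK] by blast
    show "\<exists>\<beta> j. \<beta> \<noteq> 0 \<and> j < m \<and> (\<forall>\<mu>. \<phi> \<mu> = \<beta> * \<mu> ^ (q ^ j))"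
    proof (intro exI[of _ "\<phi> 1"] exI[of _ j] conjI allI)
      fix \<mu> show "\<phi> \<mu> = \<phi> 1 * \<mu> ^ (q ^ j)" using j(2)[rule_format, of \<mu>] p1 by (simp add: \<psi>_def field_simps)
    qed (use p1 j in auto)
  next
    assume "\<exists>\<beta> j. \<beta> \<noteq> 0 \<and> j < m \<and> (\<forall>\<mu>. \<phi> \<mu> = \<beta> * \<mu> ^ (q ^ j))"
    then obtain \<beta> j where b0: "\<beta> \<noteq> 0" and pf: "\<And>\<mu>. \<phi> \<mu> = \<beta> * \<mu> ^ (q ^ j)" by blast
    have sc: "\<exists>a'. \<forall>x. \<phi> (a' * x) = a * \<phi> x" for a
    proof -
      obtain a' where a': "\<phi> a' = \<beta> * a" using surj by blast
      then have "a' ^ (q ^ j) = a" using pf[of a'] b0 by simp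
      then show ?thesis by (intro exI[of _ a']) (auto simp: pf power_mult_distrib)
    qed
    show "fully_linear \<phi>" unfolding fully_linear_def linear_on_code_def
    proof (intro allI impI)
      fix n and C :: "'a list set" assume "n \<ge> 1" and sub: "is_subspace n C"
      then have Cl: "\<And>v. v \<in> C \<Longrightarrow> length v = n" and C0: "replicate n 0 \<in> C"
        and Cadd: "\<And>u v. u \<in> C \<Longrightarrow> v \<in> C \<Longrightarrow> vadd u v \<in> C"
        and Csm: "\<And>a v. v \<in> C \<Longrightarrow> vsmult a v \<in> C"
        unfolding is_subspace_def by auto
      show "is_subspace n (map \<phi> ` C)"
        unfolding is_subspace_def
      proof (intro conjI ballI allI)
        show "map \<phi> ` C \<subseteq> {v. length v = n}" using Cl by auto
        show "replicate n 0 \<in> map \<phi> ` C"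
          using C0 by (intro image_eqI[of _ _ "replicate n 0"]) (auto simp: p0)
      next
        fix u v assume "u \<in> map \<phi> ` C" "v \<in> map \<phi> ` C"
        then obtain u' v' where "u' \<in> C" "v' \<in> C" "u = map \<phi> u'" "v = map \<phi> v'" by blast
        then show "vadd u v \<in> map \<phi> ` C"
          using Cadd Cl map2_hom[of \<phi> u' v', OF padd]
          by (intro image_eqI[of _ _ "vadd u' v'"]) (auto simp: vadd_def)
      next
        fix a v assume "v \<in> map \<phi> ` C"
        then obtain v' where "v' \<in> C" "v = map \<phi> v'" by blast
        moreover obtain a' where "\<forall>x. \<phi> (a' * x) = a * \<phi> x" using sc by blast
        ultimately show "vsmult a v \<in> map \<phi> ` C"
          using Csm by (intro image_eqI[of _ _ "vsmult a' v'"]) (auto simp: vsmult_def)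
      qed
    qed
  qed
qed

end
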